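(* The rank function of a U-matroid $U=(E,\mathcal{D},\rho)$ is determined by the set $\mathcal{B}(U)$ and the lattice $\mathcal{D}$ by the formula $\rho(A) = \max\{|A\cap B|: B\in\mathcal{B}(U)\}$ for $A\in\mathcal{D}$.
   Context: A U-matroid is a triple $U=(E,\mathcal{D},\rho)$ where $E$ is finite, $\mathcal{D}\subseteq2^E$ is an accessible distributive lattice of sets (closed under union and intersection, containing $\emptyset$ and $E$, every nonempty member $A$ has some $x\in A$ with $A-x\in\mathcal{D}$), and $\rho:\mathcal{D}\to\mathbb{N}$ satisfies $\rho(\emptyset)=0$, monotonicity, submodularity, and unit increase ($\rho(A\cup e)-\rho(A)\le 1$ when both sets lie in $\mathcal{D}$). Its base polyhedron is $\{\mathbf{x}\in\mathbb{R}^E:\mathbf{x}(A)\le\rho(A)\ \forall A\in\mathcal{D},\ \mathbf{x}(E)=\rho(E)\}$. A basis of $U$ is the support of a vertex of its base polyhedron; $\mathcal{B}(U)$ is the set of bases. Equivalently, each basis arises from a maximal chain $\emptyset=A_0\lessdot\cdots\lessdot A_n=E$ in $\mathcal{D}$ as the set of elements $A_i\setminus A_{i-1}$ with $\rho(A_i)=\rho(A_{i-1})+1$. *)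

theory Defs
  imports Complex_Main
begin

definition accessible_distributive_lattice :: "'a set \<Rightarrow> 'a set set \<Rightarrow> bool" where
  "accessible_distributive_lattice E D \<longleftrightarrow>
     finite E \<and> D \<subseteq> Pow E \<and> {} \<in> D \<and> E \<in> D \<and>
     (\<forall>A\<in>D. \<forall>B\<in>D. A \<union> B \<in> D \<and> A \<inter> B \<in> D) \<and>
     (\<forall>A\<in>D. A \<noteq> {} \<longrightarrow> (\<exists>x\<in>A. A - {x} \<in> D))"

definition U_matroid :: "'a set \<Rightarrow> 'a set set \<Rightarrow> ('a set \<Rightarrow> nat) \<Rightarrow> bool" where
  "U_matroid E D \<rho> \<longleftrightarrow>
     accessible_distributive_lattice E D \<and>
     \<rho> {} = 0 \<and>
     (\<forall>A\<in>D. \<forall>B\<in>D. A \<subseteq> B \<longrightarrow> \<rho> A \<le> \<rho> B) \<and>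
     (\<forall>A\<in>D. \<forall>B\<in>D. \<rho> (A \<union> B) + \<rho> (A \<inter> B) \<le> \<rho> A + \<rho> B) \<and>
     (\<forall>A\<in>D. \<forall>e. A \<union> {e} \<in> D \<longrightarrow> \<rho> (A \<union> {e}) \<le> \<rho> A + 1)"

text \<open>Base polyhedron in R^E; vectors are functions 'a => real vanishing outside E.\<close>
definition base_polyhedron :: "'a set \<Rightarrow> 'a set set \<Rightarrow> ('a set \<Rightarrow> nat) \<Rightarrow> ('a \<Rightarrow> real) set" where
  "base_polyhedron E D \<rho> =
     {x. (\<forall>e. e \<notin> E \<longrightarrow> x e = 0) \<and>
         (\<forall>A\<in>D. (\<Sum>e\<in>A. x e) \<le> real (\<rho> A)) \<and>
         (\<Sum>e\<in>E. x e) = real (\<rho> E)}"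

definition is_vertex :: "('a \<Rightarrow> real) \<Rightarrow> ('a \<Rightarrow> real) set \<Rightarrow> bool" where
  "is_vertex x P \<longleftrightarrow> x \<in> P \<and>
     \<not> (\<exists>y\<in>P. \<exists>z\<in>P. y \<noteq> z \<and> (\<exists>t::real. 0 < t \<and> t < 1 \<and> x = (\<lambda>e. t * y e + (1 - t) * z e)))"

definition support :: "'a set \<Rightarrow> ('a \<Rightarrow> real) \<Rightarrow> 'a set" where
  "support E x = {e\<in>E. x e \<noteq> 0}"

definition bases :: "'a set \<Rightarrow> 'a set set \<Rightarrow> ('a set \<Rightarrow> nat) \<Rightarrow> 'a set set" where
  "bases E D \<rho> = {support E x | x. is_vertex x (base_polyhedron E D \<rho>)}"

end

theory Submission
  imports Defs
begin

locale um =
  fixes E :: "'a set" and D :: "'a set set" and \<rho> :: "'a set \<Rightarrow> nat"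
  assumes U: "U_matroid E D \<rho>"
begin

lemma finE: "finite E" using U unfolding U_matroid_def accessible_distributive_lattice_def by auto
lemma DE: "S \<in> D \<Longrightarrow> S \<subseteq> E" using U unfolding U_matroid_def accessible_distributive_lattice_def by auto
lemma emptyD: "{} \<in> D" using U unfolding U_matroid_def accessible_distributive_lattice_def by auto
lemma ED: "E \<in> D" using U unfolding U_matroid_def accessible_distributive_lattice_def by auto
lemma unD: "S \<in> D \<Longrightarrow> T \<in> D \<Longrightarrow> S \<union> T \<in> D" using U unfolding U_matroid_def accessible_distributive_lattice_def by auto
lemma intD: "S \<in> D \<Longrightarrow> T \<in> D \<Longrightarrow> S \<inter> T \<in> D" using U unfolding U_matroid_def accessible_distributive_lattice_def by auto
lemma acc: "S \<in> D \<Longrightarrow> S \<noteq> {} \<Longrightarrow> \<exists>x\<in>S. S - {x} \<in> D" using U unfolding U_matroid_def accessible_distributive_lattice_def by auto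
lemma rho0: "\<rho> {} = 0" using U unfolding U_matroid_def by auto
lemma mono: "S \<in> D \<Longrightarrow> T \<in> D \<Longrightarrow> S \<subseteq> T \<Longrightarrow> \<rho> S \<le> \<rho> T" using U unfolding U_matroid_def by auto
lemma submod: "S \<in> D \<Longrightarrow> T \<in> D \<Longrightarrow> \<rho> (S \<union> T) + \<rho> (S \<inter> T) \<le> \<rho> S + \<rho> T" using U unfolding U_matroid_def by auto
lemma unit: "S \<in> D \<Longrightarrow> S \<union> {e} \<in> D \<Longrightarrow> \<rho> (S \<union> {e}) \<le> \<rho> S + 1" using U unfolding U_matroid_def by auto
lemma finS: "S \<in> D \<Longrightarrow> finite S" using DE finE finite_subset by blast
lemma finD: "finite D" using DE finE by (meson Pow_iff finite_Pow_iff finite_subset subsetI)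

lemma step_down:
  "A \<in> D \<Longrightarrow> S \<in> D \<Longrightarrow> A \<subseteq> S \<Longrightarrow> A \<noteq> S \<Longrightarrow> \<exists>x\<in>S - A. S - {x} \<in> D"
proof (induction "card S" arbitrary: S A rule: less_induct)
  case less
  have "S \<noteq> {}" using less by auto
  then obtain y where y: "y \<in> S" "S - {y} \<in> D" using acc less by blast
  show ?case
  proof (cases "y \<in> A")
    case False thus ?thesis using y by blast
  next
    case True
    have AD: "A - {y} \<in> D"
    proof -
      have "A \<inter> (S - {y}) = A - {y}" using less.prems by auto
      thus ?thesis using intD[OF less.prems(1) y(2)] by simp
    qed
    have c: "card (S - {y}) < card S" using card_Diff1_less[OF finS[OF less.prems(2)] y(1)] .
    have "A - {y} \<subseteq> S - {y}" "A - {y} \<noteq> S - {y}" using True less.prems by auto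
    then obtain x where x: "x \<in> (S - {y}) - (A - {y})" "(S - {y}) - {x} \<in> D"
      using less.hyps[OF c AD y(2)] by blast
    have "((S - {y}) - {x}) \<union> A = S - {x}" using x True less.prems by auto
    then have "S - {x} \<in> D" using unD[OF x(2) less.prems(1)] by simp
    thus ?thesis using x by auto
  qed
qed

lemma chain_up:
  "A \<in> D \<Longrightarrow> S \<in> D \<Longrightarrow> A \<subseteq> S \<Longrightarrow>
   \<exists>ys. distinct ys \<and> set ys = S - A \<and> (\<forall>k\<le>length ys. A \<union> set (take k ys) \<in> D)"
proof (induction "card (S - A)" arbitrary: S rule: less_induct)
  case less
  show ?case
  proof (cases "A = S")
    case True then show ?thesis using less.prems by (intro exI[of _ "[]"]) simp
  next
    case False
    obtain x where x: "x \<in> S - A" "S - {x} \<in> D" using step_down less.prems False by blast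
    have e: "S - {x} - A = (S - A) - {x}" by auto
    have c: "card (S - {x} - A) < card (S - A)" unfolding e
      using x finS less.prems by (meson card_Diff1_less finite_Diff)
    obtain ys where ys: "distinct ys" "set ys = S - {x} - A" "\<forall>k\<le>length ys. A \<union> set (take k ys) \<in> D"
      using less.hyps[OF c _ x(2)] less.prems x by auto
    show ?thesis
    proof (intro exI[of _ "ys @ [x]"] conjI allI impI)
      show "distinct (ys @ [x])" using ys by auto
      show "set (ys @ [x]) = S - A" using ys x by auto
      fix k assume k: "k \<le> length (ys @ [x])"
      then consider "k \<le> length ys" | "k = Suc (length ys)" by fastforce
      then show "A \<union> set (take k (ys @ [x])) \<in> D"
      proof cases
        case 1 then show ?thesis using ys by simp
      next
        case 2
        have "A \<union> set (take k (ys @ [x])) = S" using 2 ys x less.prems by auto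
        then show ?thesis using less.prems by simp
      qed
    qed
  qed
qed

lemma chain_exists:
  assumes "A \<in> D"
  shows "\<exists>es m. distinct es \<and> set es = E \<and> (\<forall>k\<le>length es. set (take k es) \<in> D)
     \<and> m \<le> length es \<and> set (take m es) = A"
proof -
  obtain ys1 where y1: "distinct ys1" "set ys1 = A - {}" "\<forall>k\<le>length ys1. {} \<union> set (take k ys1) \<in> D"
    using chain_up[OF emptyD assms] by blast
  obtain ys2 where y2: "distinct ys2" "set ys2 = E - A" "\<forall>k\<le>length ys2. A \<union> set (take k ys2) \<in> D"
    using chain_up[OF assms ED DE[OF assms]] by blast
  show ?thesis
  proof (intro exI[of _ "ys1 @ ys2"] exI[of _ "length ys1"] conjI allI impI)
    show "distinct (ys1 @ ys2)" using y1 y2 by auto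
    show "set (ys1 @ ys2) = E" using y1 y2 DE[OF assms] by auto
    show "length ys1 \<le> length (ys1 @ ys2)" by simp
    show "set (take (length ys1) (ys1 @ ys2)) = A" using y1 by simp
    fix k assume k: "k \<le> length (ys1 @ ys2)"
    show "set (take k (ys1 @ ys2)) \<in> D"
    proof (cases "k \<le> length ys1")
      case True then show ?thesis using y1 by simp
    next
      case False
      then have "set (take k (ys1 @ ys2)) = A \<union> set (take (k - length ys1) ys2)"
        using y1 by simp
      then show ?thesis using y2 k by simp
    qed
  qed
qed

lemma card_support:
  assumes "\<And>e. e \<in> E \<Longrightarrow> x e = 0 \<or> x e = 1" "A \<subseteq> E"
  shows "real (card (A \<inter> support E x)) = (\<Sum>e\<in>A. x e)"
proof -
  have fA: "finite A" using assms finE finite_subset by blast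
  have "(\<Sum>e\<in>A. x e) = (\<Sum>e\<in>A. if x e \<noteq> 0 then 1 else 0)"
    using assms by (intro sum.cong) auto
  also have "\<dots> = (\<Sum>e\<in>{e\<in>A. x e \<noteq> 0}. 1)" by (rule sum.inter_filter[OF fA, symmetric])
  also have "{e\<in>A. x e \<noteq> 0} = A \<inter> support E x" using assms unfolding support_def by auto
  finally show ?thesis by simp
qed

abbreviation "Pol \<equiv> base_polyhedron E D \<rho>"

lemma perturb:
  assumes xP: "x \<in> Pol" and e: "e \<in> E" and f: "f \<in> E" and ef: "e \<noteq> f"
    and tight: "\<And>S. S \<in> D \<Longrightarrow> (\<Sum>u\<in>S. x u) = real (\<rho> S) \<Longrightarrow> (e \<in> S \<longleftrightarrow> f \<in> S)"
  shows "\<not> is_vertex x Pol"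
proof
  assume vx: "is_vertex x Pol"
  define d where "d = (\<lambda>u. (if u = e then 1 else 0) - (if u = f then 1 else (0::real)))"
  have sd: "(\<Sum>u\<in>S. d u) = (if e \<in> S then 1 else 0) - (if f \<in> S then 1 else 0)" if "finite S" for S
    unfolding d_def using that by (simp add: sum_subtractf)
  define NT where "NT = {S\<in>D. (\<Sum>u\<in>S. x u) \<noteq> real (\<rho> S)}"
  define Sl where "Sl = (\<lambda>S. real (\<rho> S) - (\<Sum>u\<in>S. x u)) ` NT"
  have xle: "(\<Sum>u\<in>S. x u) \<le> real (\<rho> S)" if "S \<in> D" for S
    using xP that unfolding base_polyhedron_def by auto
  have finSl: "finite Sl" unfolding Sl_def NT_def using finD by simp
  have posSl: "\<forall>s\<in>Sl. 0 < s" unfolding Sl_def NT_def using xle by fastforce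
  define \<epsilon> where "\<epsilon> = (if Sl = {} then 1 else Min Sl)"
  have epos: "\<epsilon> > 0" unfolding \<epsilon>_def using finSl posSl by auto
  have ele: "\<epsilon> \<le> real (\<rho> S) - (\<Sum>u\<in>S. x u)" if "S \<in> NT" for S
  proof -
    have "real (\<rho> S) - (\<Sum>u\<in>S. x u) \<in> Sl" unfolding Sl_def using that by blast
    then show ?thesis unfolding \<epsilon>_def using finSl by auto
  qed
  have inP: "(\<lambda>u. x u + c * d u) \<in> Pol" if c: "\<bar>c\<bar> \<le> \<epsilon>" for c
  proof -
    have out: "\<forall>u. u \<notin> E \<longrightarrow> x u + c * d u = 0"
      using xP e f unfolding base_polyhedron_def d_def by auto
    have sm: "(\<Sum>u\<in>S. x u + c * d u) = (\<Sum>u\<in>S. x u) + c * (\<Sum>u\<in>S. d u)" for S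
      by (simp add: sum.distrib sum_distrib_left)
    have le: "(\<Sum>u\<in>S. x u + c * d u) \<le> real (\<rho> S)" if S: "S \<in> D" for S
    proof (cases "(\<Sum>u\<in>S. x u) = real (\<rho> S)")
      case True
      then have "(\<Sum>u\<in>S. d u) = 0" using tight[OF S True] sd finS[OF S] by simp
      then show ?thesis using sm True by simp
    next
      case False
      then have "S \<in> NT" unfolding NT_def using S by blast
      then have "\<epsilon> \<le> real (\<rho> S) - (\<Sum>u\<in>S. x u)" by (rule ele)
      moreover have "\<bar>\<Sum>u\<in>S. d u\<bar> \<le> 1" using sd finS[OF S] by auto
      moreover have "c * (\<Sum>u\<in>S. d u) \<le> \<bar>c\<bar> * \<bar>\<Sum>u\<in>S. d u\<bar>"
        by (metis abs_ge_self abs_mult)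
      moreover have "\<bar>c\<bar> * \<bar>\<Sum>u\<in>S. d u\<bar> \<le> \<bar>c\<bar>"
        using \<open>\<bar>\<Sum>u\<in>S. d u\<bar> \<le> 1\<close> by (simp add: mult_left_le)
      ultimately show ?thesis using sm[of S] c by linarith
    qed
    have xE: "(\<Sum>u\<in>E. x u) = real (\<rho> E)" using xP unfolding base_polyhedron_def by auto
    have "(\<Sum>u\<in>E. d u) = 0" using sd finE e f by simp
    then have eq: "(\<Sum>u\<in>E. x u + c * d u) = real (\<rho> E)" using sm xE by simp
    show ?thesis unfolding base_polyhedron_def using out le eq by blast
  qed
  have y: "(\<lambda>u. x u + \<epsilon> * d u) \<in> Pol" using inP epos by simp
  have z: "(\<lambda>u. x u + (- \<epsilon>) * d u) \<in> Pol" using inP[of "- \<epsilon>"] abs_minus_cancel[of \<epsilon>] epos by (metis abs_of_pos order_refl)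
  have ne: "(\<lambda>u. x u + \<epsilon> * d u) \<noteq> (\<lambda>u. x u + (- \<epsilon>) * d u)"
  proof
    assume "(\<lambda>u. x u + \<epsilon> * d u) = (\<lambda>u. x u + (- \<epsilon>) * d u)"
    then have "x e + \<epsilon> * d e = x e + (- \<epsilon>) * d e" by metis
    then show False using epos ef unfolding d_def by simp
  qed
  have xx: "x = (\<lambda>u. (1/2) * (x u + \<epsilon> * d u) + (1 - 1/2) * (x u + (- \<epsilon>) * d u))"
    by (rule ext) (simp add: algebra_simps)
  have h: "0 < (1/2::real)" "(1/2::real) < 1" by auto
  have "\<exists>y\<in>Pol. \<exists>z\<in>Pol. y \<noteq> z \<and> (\<exists>t::real. 0 < t \<and> t < 1 \<and> x = (\<lambda>e. t * y e + (1 - t) * z e))"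
    using y z ne xx h by blast
  then show False using vx unfolding is_vertex_def by blast
qed

lemma vertex01:
  assumes vx: "is_vertex x Pol" and e: "e \<in> E"
  shows "x e = 0 \<or> x e = 1"
proof -
  have xP: "x \<in> Pol" using vx unfolding is_vertex_def by blast
  have xle: "(\<Sum>u\<in>S. x u) \<le> real (\<rho> S)" if "S \<in> D" for S
    using xP that unfolding base_polyhedron_def by auto
  define T where "T = {S\<in>D. (\<Sum>u\<in>S. x u) = real (\<rho> S)}"
  have tun: "S \<union> S' \<in> T \<and> S \<inter> S' \<in> T" if "S \<in> T" "S' \<in> T" for S S'
  proof -
    have D: "S \<in> D" "S' \<in> D" using that unfolding T_def by auto
    have "(\<Sum>u\<in>S \<union> S'. x u) + (\<Sum>u\<in>S \<inter> S'. x u) = (\<Sum>u\<in>S. x u) + (\<Sum>u\<in>S'. x u)"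
      using sum.union_inter finS D by blast
    moreover have "real (\<rho> (S \<union> S')) + real (\<rho> (S \<inter> S')) \<le> real (\<rho> S) + real (\<rho> S')"
      using submod[OF D] by linarith
    moreover have "(\<Sum>u\<in>S \<union> S'. x u) \<le> real (\<rho> (S \<union> S'))" using xle unD D by blast
    moreover have "(\<Sum>u\<in>S \<inter> S'. x u) \<le> real (\<rho> (S \<inter> S'))" using xle intD D by blast
    ultimately show ?thesis using that unD intD D unfolding T_def by auto
  qed
  have ET: "E \<in> T" using xP ED unfolding T_def base_polyhedron_def by auto
  obtain M where M: "M \<in> T \<and> e \<in> M" "\<forall>S. S \<in> T \<and> e \<in> S \<longrightarrow> card M \<le> card S"
    using ex_has_least_nat[of "\<lambda>S. S \<in> T \<and> e \<in> S" E card] ET e by blast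
  have MD: "M \<in> D" using M unfolding T_def by auto
  have Msub: "M \<subseteq> S" if "S \<in> T" "e \<in> S" for S
  proof -
    have "M \<inter> S \<in> T" using tun M that by blast
    then have "card M \<le> card (M \<inter> S)" using M that by blast
    then have "M \<inter> S = M" using card_subset_eq[of M "M \<inter> S"] finS[OF MD]
      by (metis Int_lower1 card_mono finite_Int le_antisym)
    then show ?thesis by blast
  qed
  have emptyT: "{} \<in> T" unfolding T_def using emptyD rho0 by simp
  obtain N where N: "N \<in> T \<and> N \<subseteq> M \<and> e \<notin> N"
    "\<forall>S. S \<in> T \<and> S \<subseteq> M \<and> e \<notin> S \<longrightarrow> card (M - N) \<le> card (M - S)"
    using ex_has_least_nat[of "\<lambda>S. S \<in> T \<and> S \<subseteq> M \<and> e \<notin> S" "{}" "\<lambda>S. card (M - S)"] emptyT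
    by blast
  have ND: "N \<in> D" using N unfolding T_def by auto
  have Nsup: "S \<subseteq> N" if "S \<in> T" "S \<subseteq> M" "e \<notin> S" for S
  proof -
    have "N \<union> S \<in> T" using tun N that by blast
    then have "card (M - N) \<le> card (M - (N \<union> S))" using N that by blast
    then have "M - (N \<union> S) = M - N" using finS[OF MD]
      by (metis Diff_mono card_seteq finite_Diff order_refl sup_ge1)
    then show ?thesis using that by blast
  qed
  have MN: "M = insert e N"
  proof (rule ccontr)
    assume "M \<noteq> insert e N"
    then obtain f where f: "f \<in> M" "f \<noteq> e" "f \<notin> N" using N M by blast
    have fE: "f \<in> E" using DE[OF MD] f by blast
    have "\<not> is_vertex x Pol"
    proof (rule perturb[OF xP e fE f(2)[symmetric]])
      fix S assume S: "S \<in> D" "(\<Sum>u\<in>S. x u) = real (\<rho> S)"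
      then have ST: "S \<in> T" unfolding T_def by blast
      show "e \<in> S \<longleftrightarrow> f \<in> S"
      proof
        assume "e \<in> S" then show "f \<in> S" using Msub[OF ST] f by blast
      next
        assume fS: "f \<in> S"
        show "e \<in> S"
        proof (rule ccontr)
          assume "e \<notin> S"
          then have "S \<inter> M \<subseteq> N" using Nsup[of "S \<inter> M"] tun[OF ST] M by blast
          then show False using fS f by blast
        qed
      qed
    qed
    then show False using vx by blast
  qed
  have "(\<Sum>u\<in>M. x u) = x e + (\<Sum>u\<in>N. x u)" using MN N finS[OF ND] by simp
  then have xe: "x e = real (\<rho> M) - real (\<rho> N)" using M N unfolding T_def by auto
  have "\<rho> N \<le> \<rho> M" using mono[OF ND MD] N by blast
  moreover have "\<rho> M \<le> \<rho> N + 1" using unit[OF ND] MN MD by (metis insert_is_Un sup_commute)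
  ultimately have "\<rho> M = \<rho> N \<or> \<rho> M = \<rho> N + 1" by linarith
  then show ?thesis using xe by auto
qed

end

locale chn = um +
  fixes es :: "'a list"
  assumes dist: "distinct es" and setE: "set es = E"
    and pref: "\<And>k. k \<le> length es \<Longrightarrow> set (take k es) \<in> D"
begin

definition idx :: "'a \<Rightarrow> nat" where "idx e = (THE i. i < length es \<and> es ! i = e)"

definition g :: "'a \<Rightarrow> real" where
  "g e = (if e \<in> set es then real (\<rho> (set (take (Suc (idx e)) es))) - real (\<rho> (set (take (idx e) es))) else 0)"

lemma idx_nth: "k < length es \<Longrightarrow> idx (es ! k) = k"
  unfolding idx_def using dist by (auto intro!: the_equality simp: nth_eq_iff_index_eq)

lemma g_nth: "k < length es \<Longrightarrow> g (es ! k) = real (\<rho> (set (take (Suc k) es))) - real (\<rho> (set (take k es)))"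
  unfolding g_def using idx_nth by simp

lemma take_ins: "k < length es \<Longrightarrow> set (take (Suc k) es) = insert (es ! k) (set (take k es))"
  by (simp add: take_Suc_conv_app_nth)

lemma nth_notin: "k < length es \<Longrightarrow> es ! k \<notin> set (take k es)"
proof -
  assume k: "k < length es"
  have "distinct (take (Suc k) es)" using dist by simp
  then show ?thesis using k by (simp add: take_Suc_conv_app_nth)
qed

lemma g_sum: "k \<le> length es \<Longrightarrow> (\<Sum>e\<in>set (take k es). g e) = real (\<rho> (set (take k es)))"
proof (induction k)
  case 0 then show ?case using rho0 by simp
next
  case (Suc k)
  then have k: "k < length es" by simp
  have "(\<Sum>e\<in>set (take (Suc k) es). g e) = g (es ! k) + (\<Sum>e\<in>set (take k es). g e)"
    using take_ins[OF k] nth_notin[OF k] by simp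
  then show ?case using Suc g_nth[OF k] by simp
qed

lemma g01: "e \<in> E \<Longrightarrow> g e = 0 \<or> g e = 1"
proof -
  assume "e \<in> E"
  then obtain k where k: "k < length es" "e = es ! k" using setE by (metis in_set_conv_nth)
  have D1: "set (take k es) \<in> D" "set (take (Suc k) es) \<in> D" using pref k by auto
  have "\<rho> (set (take k es)) \<le> \<rho> (set (take (Suc k) es))"
    using mono[OF D1] take_ins[OF k(1)] by blast
  moreover have "\<rho> (set (take (Suc k) es)) \<le> \<rho> (set (take k es)) + 1"
    using unit[of "set (take k es)" "es ! k"] D1 take_ins[OF k(1)] by simp
  ultimately have "\<rho> (set (take (Suc k) es)) = \<rho> (set (take k es)) \<or>
     \<rho> (set (take (Suc k) es)) = \<rho> (set (take k es)) + 1" by linarith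
  then show ?thesis using g_nth[OF k(1)] k by auto
qed

lemma g_le: "S \<in> D \<Longrightarrow> k \<le> length es \<Longrightarrow> (\<Sum>e\<in>S \<inter> set (take k es). g e) \<le> real (\<rho> (S \<inter> set (take k es)))"
proof (induction k)
  case 0 then show ?case using rho0 by simp
next
  case (Suc k)
  then have k: "k < length es" by simp
  show ?case
  proof (cases "es ! k \<in> S")
    case False
    then have "S \<inter> set (take (Suc k) es) = S \<inter> set (take k es)" using take_ins[OF k] by auto
    then show ?thesis using Suc by simp
  next
    case True
    let ?P = "set (take k es)" and ?Q = "set (take (Suc k) es)"
    have eq: "S \<inter> ?Q = insert (es ! k) (S \<inter> ?P)" using True take_ins[OF k] by auto
    have nin: "es ! k \<notin> S \<inter> ?P" using nth_notin[OF k] by blast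
    have fin: "finite (S \<inter> ?P)" by simp
    have "(\<Sum>e\<in>S \<inter> ?Q. g e) = g (es ! k) + (\<Sum>e\<in>S \<inter> ?P. g e)"
      unfolding eq using nin fin by simp
    also have "\<dots> \<le> real (\<rho> ?Q) - real (\<rho> ?P) + real (\<rho> (S \<inter> ?P))"
      using g_nth[OF k] Suc by simp
    also have "\<dots> \<le> real (\<rho> (S \<inter> ?Q))"
    proof -
      have D1: "S \<inter> ?Q \<in> D" "?P \<in> D" using intD Suc.prems pref k by auto
      have u: "(S \<inter> ?Q) \<union> ?P = ?Q" using eq take_ins[OF k] by auto
      have i: "(S \<inter> ?Q) \<inter> ?P = S \<inter> ?P" using take_ins[OF k] by auto
      show ?thesis using submod[OF D1] u i by simp
    qed
    finally show ?thesis .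
  qed
qed

lemma g_in: "g \<in> Pol"
proof -
  have out: "\<forall>e. e \<notin> E \<longrightarrow> g e = 0" unfolding g_def using setE by simp
  have le: "\<forall>S\<in>D. (\<Sum>e\<in>S. g e) \<le> real (\<rho> S)"
  proof
    fix S assume S: "S \<in> D"
    have "S \<inter> set (take (length es) es) = S" using DE[OF S] setE by auto
    then show "(\<Sum>e\<in>S. g e) \<le> real (\<rho> S)" using g_le[OF S, of "length es"] by simp
  qed
  have "(\<Sum>e\<in>E. g e) = real (\<rho> E)" using g_sum[of "length es"] setE by simp
  then show ?thesis unfolding base_polyhedron_def using out le by blast
qed

lemma g_vertex: "is_vertex g Pol"
proof -
  have "y = z" if y: "y \<in> Pol" and z: "z \<in> Pol" and t: "0 < t" "t < 1"
    and gyz: "g = (\<lambda>e. t * y e + (1 - t) * z e)" for y z t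
  proof -
    have tk: "(\<Sum>e\<in>set (take k es). y e) = real (\<rho> (set (take k es))) \<and>
              (\<Sum>e\<in>set (take k es). z e) = real (\<rho> (set (take k es)))" if k: "k \<le> length es" for k
    proof -
      let ?P = "set (take k es)"
      have "?P \<in> D" using pref k by blast
      then have a: "(\<Sum>e\<in>?P. y e) \<le> real (\<rho> ?P)" "(\<Sum>e\<in>?P. z e) \<le> real (\<rho> ?P)"
        using y z unfolding base_polyhedron_def by auto
      have "(\<Sum>e\<in>?P. g e) = t * (\<Sum>e\<in>?P. y e) + (1 - t) * (\<Sum>e\<in>?P. z e)"
        unfolding gyz by (simp add: sum.distrib sum_distrib_left)
      then have b: "t * (\<Sum>e\<in>?P. y e) + (1 - t) * (\<Sum>e\<in>?P. z e) = real (\<rho> ?P)"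
        using g_sum[OF k] by simp
      have c1: "t * (\<Sum>e\<in>?P. y e) \<le> t * real (\<rho> ?P)" using a t by simp
      have c2: "(1 - t) * (\<Sum>e\<in>?P. z e) \<le> (1 - t) * real (\<rho> ?P)" using a t by simp
      have r: "t * real (\<rho> ?P) + (1 - t) * real (\<rho> ?P) = real (\<rho> ?P)" by (simp add: algebra_simps)
      have "t * (\<Sum>e\<in>?P. y e) = t * real (\<rho> ?P)" using b c1 c2 r by linarith
      moreover have "(1 - t) * (\<Sum>e\<in>?P. z e) = (1 - t) * real (\<rho> ?P)"
        using b c1 c2 r by linarith
      ultimately show ?thesis using t by simp
    qed
    show "y = z"
    proof
      fix e
      show "y e = z e"
      proof (cases "e \<in> E")
        case False then show ?thesis using y z unfolding base_polyhedron_def by auto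
      next
        case True
        then obtain k where k: "k < length es" "e = es ! k" using setE by (metis in_set_conv_nth)
        have s1: "(\<Sum>u\<in>set (take (Suc k) es). y u) = y e + (\<Sum>u\<in>set (take k es). y u)"
          using take_ins[OF k(1)] nth_notin[OF k(1)] k by simp
        have s2: "(\<Sum>u\<in>set (take (Suc k) es). z u) = z e + (\<Sum>u\<in>set (take k es). z u)"
          using take_ins[OF k(1)] nth_notin[OF k(1)] k by simp
        show ?thesis using s1 s2 tk[of k] tk[of "Suc k"] k by simp
      qed
    qed
  qed
  note yz = this
  show ?thesis unfolding is_vertex_def
  proof (intro conjI g_in notI)
    assume "\<exists>y\<in>Pol. \<exists>z\<in>Pol. y \<noteq> z \<and> (\<exists>t::real. 0 < t \<and> t < 1 \<and> g = (\<lambda>e. t * y e + (1 - t) * z e))"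
    then obtain y z t where "y \<in> Pol" "z \<in> Pol" "y \<noteq> z" "0 < t" "t < 1" "g = (\<lambda>e. t * y e + (1 - t) * z e)"
      by blast
    then show False using yz by blast
  qed
qed

end

theorem proposition3p6:
  fixes E :: "'a set" and D :: "'a set set" and \<rho> :: "'a set \<Rightarrow> nat"
  assumes "U_matroid E D \<rho>"
    and "A \<in> D"
  shows "\<rho> A = Max {card (A \<inter> B) | B. B \<in> bases E D \<rho>}"
proof -
  interpret um E D \<rho> using assms(1) by (unfold_locales)
  let ?S = "{card (A \<inter> B) | B. B \<in> bases E D \<rho>}"
  have AE: "A \<subseteq> E" using DE assms(2) by blast
  have fin: "finite ?S"
  proof -
    have "bases E D \<rho> \<subseteq> Pow E" unfolding bases_def support_def by auto
    then have "finite (bases E D \<rho>)" using finE finite_subset by blast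
    then show ?thesis by simp
  qed
  have up: "n \<le> \<rho> A" if nS: "n \<in> ?S" for n
  proof -
    obtain B where nB: "n = card (A \<inter> B)" "B \<in> bases E D \<rho>" using nS by blast
    obtain x where Bx: "B = support E x" and vx: "is_vertex x Pol"
      using nB(2) unfolding bases_def by blast
    have n: "n = card (A \<inter> support E x)" using nB Bx by simp
    have "real n = (\<Sum>e\<in>A. x e)" using card_support[OF vertex01[OF vx] AE] n by simp
    also have "\<dots> \<le> real (\<rho> A)" using vx assms(2) unfolding is_vertex_def base_polyhedron_def by auto
    finally show ?thesis by simp
  qed
  obtain es m where es: "distinct es" "set es = E" "\<forall>k\<le>length es. set (take k es) \<in> D"
    "m \<le> length es" "set (take m es) = A"
    using chain_exists[OF assms(2)] by blast
  interpret c: chn E D \<rho> es using es by (unfold_locales) auto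
  have "real (card (A \<inter> support E c.g)) = (\<Sum>e\<in>A. c.g e)"
    using card_support[OF c.g01 AE] by simp
  also have "\<dots> = real (\<rho> A)" using c.g_sum[OF es(4)] es(5) by simp
  finally have "card (A \<inter> support E c.g) = \<rho> A" by simp
  moreover have "support E c.g \<in> bases E D \<rho>" unfolding bases_def using c.g_vertex by blast
  ultimately have "\<rho> A \<in> ?S" by force
  then show ?thesis using Max_eqI[OF fin up] by simp
qed

end
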